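(* Fix integers $L\ge2$, $n$ divisible by $L$, $K\ge1$, and a class $\mathcal H$ of real functions of $s$. With the data, cross-fold risks $R,\widehat R$ and seminorm $\rho_N$ described in the context, suppose $Y\in[-1,1]$ almost surely and $\sup_{h\in\mathcal H}\|h\|_\infty\le1$. Then for every $\epsilon>0$, $\sup_{h_1,h_2\in\mathcal H:\ \rho_N(h_1-h_2)\le\epsilon}\big[(R(h_1)-\widehat R(h_1))-(R(h_2)-\widehat R(h_2))\big]\le2\epsilon.$
   Context: Data: $N=Kn$ independent observations $O_i=(A_i,S_i,Y_i)$, $A_i\in\{1,\dots,K\}$ the cell of unit $i$, each cell containing exactly $n$ units, i.i.d. within cell; fold labels $V_i\in\{1,\dots,L\}$ assigned independently of $(S,Y)$ with exactly $n/L$ units of each cell in each fold. Let $\tilde y(s,a,y)=y$. For $h$ a function of $s$ (or $\tilde y$, replacing $h(S_i)$ by $Y_i$): $[\Pi h](a)=E[h(S)\mid A=a]$, $[\widehat\Pi^v h](a)=(n/L)^{-1}\sum_i h(S_i)\mathbf 1\{A_i=a,V_i=v\}$, $[\widehat\Pi^{-v}h](a)=(n(L-1)/L)^{-1}\sum_i h(S_i)\mathbf 1\{A_i=a,V_i\neq v\}$. Population cross-fold risk $R(h)=-\frac1K\sum_{a}[\Pi\tilde y](a)[\Pi h](a)+\frac1{2K}\sum_a([\Pi h](a))^2$ (equivalently $-E[E[Y\mid A,V=\widetilde V]E[h(S)\mid A,V\ne\widetilde V]]+\frac12E[E[h(S)\mid A,V=\widetilde V]E[h(S)\mid A,V\ne\widetilde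 V]]$ with $\widetilde V$ an independent copy of the fold label); empirical cross-fold risk $\widehat R(h)=\frac1L\sum_{v=1}^L\frac1K\sum_{a=1}^K\big(-[\widehat\Pi^v\tilde y](a)[\widehat\Pi^{-v}h](a)+\frac12[\widehat\Pi^vh](a)[\widehat\Pi^{-v}h](a)\big)$. Norms: $\|f\|_{1,N}=\frac1N\sum_i|f(O_i)|$, $\|u\|_{1,K}=\frac1K\sum_a|u(a)|$, $\rho_N(f)=\|\Pi f\|_{1,K}+\|f\|_{1,N}$. *)

theory Defs
  imports "HOL-Probability.Probability"
begin

text \<open>Cells are 1..K, folds are 1..L, units are 0..<N with N = K*n.
  A realised sample is d :: nat => ('s * real), d i = (S_i, Y_i).
  Functions of an observation are functions of (s, y); the cell label is
  carried separately by the design map A.\<close>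

definition N_of :: "nat \<Rightarrow> nat \<Rightarrow> nat" where
  "N_of K n = K * n"

text \<open>Population projection [Pi f](a) = E[f(S,Y) | A = a], with P a the
  common law of (S_i, Y_i) for units in cell a.\<close>
definition Pi_pop :: "(nat \<Rightarrow> ('s \<times> real) measure) \<Rightarrow> ('s \<times> real \<Rightarrow> real) \<Rightarrow> nat \<Rightarrow> real" where
  "Pi_pop P f a = (\<integral>x. f x \<partial>(P a))"

definition Pi_in :: "nat \<Rightarrow> nat \<Rightarrow> nat \<Rightarrow> (nat \<Rightarrow> nat) \<Rightarrow> (nat \<Rightarrow> nat) \<Rightarrow> (nat \<Rightarrow> 's \<times> real)
    \<Rightarrow> ('s \<times> real \<Rightarrow> real) \<Rightarrow> nat \<Rightarrow> nat \<Rightarrow> real" where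
  "Pi_in K n L A V d f v a =
     inverse (real n / real L) * (\<Sum>i<N_of K n. if A i = a \<and> V i = v then f (d i) else 0)"

definition Pi_out :: "nat \<Rightarrow> nat \<Rightarrow> nat \<Rightarrow> (nat \<Rightarrow> nat) \<Rightarrow> (nat \<Rightarrow> nat) \<Rightarrow> (nat \<Rightarrow> 's \<times> real)
    \<Rightarrow> ('s \<times> real \<Rightarrow> real) \<Rightarrow> nat \<Rightarrow> nat \<Rightarrow> real" where
  "Pi_out K n L A V d f v a =
     inverse (real n * (real L - 1) / real L) * (\<Sum>i<N_of K n. if A i = a \<and> V i \<noteq> v then f (d i) else 0)"

definition ytil :: "'s \<times> real \<Rightarrow> real" where
  "ytil x = snd x"

definition liftS :: "('s \<Rightarrow> real) \<Rightarrow> 's \<times> real \<Rightarrow> real" where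
  "liftS h x = h (fst x)"

definition pop_risk :: "nat \<Rightarrow> (nat \<Rightarrow> ('s \<times> real) measure) \<Rightarrow> ('s \<Rightarrow> real) \<Rightarrow> real" where
  "pop_risk K P h =
     - (1 / real K) * (\<Sum>a\<in>{1..K}. Pi_pop P ytil a * Pi_pop P (liftS h) a)
     + (1 / (2 * real K)) * (\<Sum>a\<in>{1..K}. (Pi_pop P (liftS h) a)\<^sup>2)"

definition emp_risk :: "nat \<Rightarrow> nat \<Rightarrow> nat \<Rightarrow> (nat \<Rightarrow> nat) \<Rightarrow> (nat \<Rightarrow> nat) \<Rightarrow> (nat \<Rightarrow> 's \<times> real)
    \<Rightarrow> ('s \<Rightarrow> real) \<Rightarrow> real" where
  "emp_risk K n L A V d h =
     (1 / real L) * (\<Sum>v\<in>{1..L}. (1 / real K) * (\<Sum>a\<in>{1..K}.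
        - Pi_in K n L A V d ytil v a * Pi_out K n L A V d (liftS h) v a
        + (1/2) * Pi_in K n L A V d (liftS h) v a * Pi_out K n L A V d (liftS h) v a))"

definition norm1N :: "nat \<Rightarrow> nat \<Rightarrow> (nat \<Rightarrow> 's \<times> real) \<Rightarrow> ('s \<times> real \<Rightarrow> real) \<Rightarrow> real" where
  "norm1N K n d f = (1 / real (N_of K n)) * (\<Sum>i<N_of K n. \<bar>f (d i)\<bar>)"

definition norm1K :: "nat \<Rightarrow> (nat \<Rightarrow> real) \<Rightarrow> real" where
  "norm1K K u = (1 / real K) * (\<Sum>a\<in>{1..K}. \<bar>u a\<bar>)"

definition rhoN :: "nat \<Rightarrow> nat \<Rightarrow> (nat \<Rightarrow> ('s \<times> real) measure) \<Rightarrow> (nat \<Rightarrow> 's \<times> real)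
    \<Rightarrow> ('s \<times> real \<Rightarrow> real) \<Rightarrow> real" where
  "rhoN K n P d f = norm1K K (Pi_pop P f) + norm1N K n d f"

end

theory Submission
  imports Defs
begin

lemma int_bound:
  assumes Q: "prob_space Q" and f: "f \<in> borel_measurable Q" and b: "AE x in Q. \<bar>f x\<bar> \<le> (1::real)"
  shows "integrable Q f" "\<bar>\<integral>x. f x \<partial>Q\<bar> \<le> 1"
proof -
  interpret prob_space Q by (rule Q)
  show i: "integrable Q f" by (rule integrable_const_bound[where B=1]) (use b f in auto)
  have "\<bar>\<integral>x. f x \<partial>Q\<bar> \<le> (\<integral>x. \<bar>f x\<bar> \<partial>Q)" using integral_norm_bound[of Q f] by simp
  also have "\<dots> \<le> (\<integral>x. 1 \<partial>Q)"
    by (rule integral_mono_AE) (use i b in auto)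
  also have "\<dots> = 1" by (simp add: prob_space)
  finally show "\<bar>\<integral>x. f x \<partial>Q\<bar> \<le> 1" .
qed

lemma sum_if_card:
  "(\<Sum>i<(N::nat). if P i then (1::real) else 0) = real (card {i. i < N \<and> P i})"
proof -
  have "(\<Sum>i<N. if P i then (1::real) else 0) = sum (\<lambda>_. 1) {i\<in>{..<N}. P i}"
    by (rule sum.inter_filter[symmetric]) simp
  also have "{i\<in>{..<N}. P i} = {i. i < N \<and> P i}" by auto
  finally show ?thesis by simp
qed

lemma sum_abs_if_le:
  assumes "\<forall>i<(N::nat). \<bar>f i\<bar> \<le> (1::real)"
  shows "\<bar>\<Sum>i<N. if P i then f i else 0\<bar> \<le> real (card {i. i < N \<and> P i})"
proof -
  have "\<bar>\<Sum>i<N. if P i then f i else 0\<bar> \<le> (\<Sum>i<N. \<bar>if P i then f i else 0\<bar>)"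
    by (rule sum_abs)
  also have "\<dots> \<le> (\<Sum>i<N. if P i then (1::real) else 0)"
    by (rule sum_mono) (use assms in auto)
  finally show ?thesis by (simp add: sum_if_card)
qed


lemma abs_mult_le1: "\<bar>x\<bar> \<le> 1 \<Longrightarrow> \<bar>x * y\<bar> \<le> \<bar>y::real\<bar>"
  by (simp add: abs_mult mult_left_le_one_le)

lemma alg_bound:
  fixes iy i1 i2 o1 o2 :: real
  assumes "\<bar>iy\<bar> \<le> 1" "\<bar>o1\<bar> \<le> 1" "\<bar>i2\<bar> \<le> 1"
  shows "\<bar>(- iy * o1 + 1/2 * i1 * o1) - (- iy * o2 + 1/2 * i2 * o2)\<bar> \<le> 3/2 * \<bar>o1 - o2\<bar> + 1/2 * \<bar>i1 - i2\<bar>"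
proof -
  have e: "(- iy * o1 + 1/2 * i1 * o1) - (- iy * o2 + 1/2 * i2 * o2) = - (iy * (o1 - o2)) + 1/2 * ((i1 - i2) * o1) + 1/2 * (i2 * (o1 - o2))"
    by (simp add: algebra_simps)
  have 1: "\<bar>iy * (o1 - o2)\<bar> \<le> \<bar>o1 - o2\<bar>" by (rule abs_mult_le1) fact
  have 2: "\<bar>(i1 - i2) * o1\<bar> \<le> \<bar>i1 - i2\<bar>" using abs_mult_le1[OF assms(2), of "i1 - i2"] by (simp add: mult.commute)
  have 3: "\<bar>i2 * (o1 - o2)\<bar> \<le> \<bar>o1 - o2\<bar>" by (rule abs_mult_le1) fact
  show ?thesis unfolding e using 1 2 3 by (simp add: abs_le_iff)
qed

lemma pop_alg:
  fixes y p1 p2 :: real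
  assumes "\<bar>y\<bar> \<le> 1" "\<bar>p1\<bar> \<le> 1" "\<bar>p2\<bar> \<le> 1"
  shows "\<bar>(- (y * p1) + 1/2 * p1^2) - (- (y * p2) + 1/2 * p2^2)\<bar> \<le> 2 * \<bar>p1 - p2\<bar>"
proof -
  have e: "(- (y * p1) + 1/2 * p1^2) - (- (y * p2) + 1/2 * p2^2) = (p1 - p2) * (- y + 1/2 * (p1 + p2))"
    by (simp add: field_simps power2_eq_square)
  have "\<bar>- y + 1/2 * (p1 + p2)\<bar> \<le> 2" using assms by (auto simp add: abs_le_iff field_simps)
  hence "\<bar>p1 - p2\<bar> * \<bar>- y + 1/2 * (p1 + p2)\<bar> \<le> \<bar>p1 - p2\<bar> * 2" by (intro mult_left_mono) auto
  thus ?thesis unfolding e by (simp add: abs_mult mult.commute)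
qed

context
  fixes K n L :: nat and A V :: "nat \<Rightarrow> nat" and d :: "nat \<Rightarrow> 's \<times> real"
  assumes L2: "L \<ge> 2" and Ldvd: "L dvd n" and npos: "n > 0" and K1: "K \<ge> 1"
    and A_range: "\<forall>i<K*n. A i \<in> {1..K}"
    and V_range: "\<forall>i<K*n. V i \<in> {1..L}"
    and cell_size: "\<forall>a\<in>{1..K}. card {i. i < K*n \<and> A i = a} = n"
    and fold_size: "\<forall>a\<in>{1..K}. \<forall>v\<in>{1..L}. card {i. i < K*n \<and> A i = a \<and> V i = v} = n div L"
begin

lemma card_out:
  assumes a: "a \<in> {1..K}" and v: "v \<in> {1..L}"
  shows "card {i. i < K*n \<and> A i = a \<and> V i \<noteq> v} = n - n div L"
proof -
  have "{i. i < K*n \<and> A i = a} = {i. i < K*n \<and> A i = a \<and> V i = v} \<union> {i. i < K*n \<and> A i = a \<and> V i \<noteq> v}"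
    by auto
  hence "card {i. i < K*n \<and> A i = a} = card {i. i < K*n \<and> A i = a \<and> V i = v} + card {i. i < K*n \<and> A i = a \<and> V i \<noteq> v}"
    by (simp add: card_Un_disjoint disjoint_iff)
  thus ?thesis using cell_size fold_size a v by auto
qed

lemma nL_eq: "real n / real L = real (n div L)"
  using Ldvd by (simp add: real_of_nat_div)

lemma nL_pos: "real n / real L > 0"
  using npos L2 by simp

lemma nout_eq: "real n * (real L - 1) / real L = real (n - n div L)"
proof -
  have "n div L \<le> n" by simp
  hence "real (n - n div L) = real n - real (n div L)" by simp
  also have "\<dots> = real n - real n / real L" by (simp add: nL_eq)
  also have "\<dots> = real n * (real L - 1) / real L" using L2 by (simp add: field_simps)
  finally show ?thesis by simp
qed

lemma nout_pos: "real n * (real L - 1) / real L > 0"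
  using npos L2 by simp

lemma in_bound:
  assumes f: "\<forall>i<K*n. \<bar>f (d i)\<bar> \<le> 1" and a: "a \<in> {1..K}" and v: "v \<in> {1..L}"
  shows "\<bar>Pi_in K n L A V d f v a\<bar> \<le> 1"
proof -
  have s: "\<bar>\<Sum>i<K*n. if A i = a \<and> V i = v then f (d i) else 0\<bar> \<le> real n / real L"
    using sum_abs_if_le[of "K*n" "\<lambda>i. f (d i)" "\<lambda>i. A i = a \<and> V i = v"] f fold_size a v nL_eq
    by auto
  have "\<bar>Pi_in K n L A V d f v a\<bar> = inverse (real n / real L) * \<bar>\<Sum>i<K*n. if A i = a \<and> V i = v then f (d i) else 0\<bar>"
    unfolding Pi_in_def N_of_def using nL_pos L2 npos by (simp add: abs_mult)
  also have "\<dots> \<le> inverse (real n / real L) * (real n / real L)"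
    by (rule mult_left_mono[OF s], rule less_imp_le, rule positive_imp_inverse_positive, rule nL_pos)
  also have "\<dots> = 1" using nL_pos by (metis left_inverse less_irrefl)
  finally show ?thesis .
qed

lemma out_bound:
  assumes f: "\<forall>i<K*n. \<bar>f (d i)\<bar> \<le> 1" and a: "a \<in> {1..K}" and v: "v \<in> {1..L}"
  shows "\<bar>Pi_out K n L A V d f v a\<bar> \<le> 1"
proof -
  have s: "\<bar>\<Sum>i<K*n. if A i = a \<and> V i \<noteq> v then f (d i) else 0\<bar> \<le> real n * (real L - 1) / real L"
    using sum_abs_if_le[of "K*n" "\<lambda>i. f (d i)" "\<lambda>i. A i = a \<and> V i \<noteq> v"] f card_out[OF a v] nout_eq
    by auto
  have "\<bar>Pi_out K n L A V d f v a\<bar> = inverse (real n * (real L - 1) / real L) * \<bar>\<Sum>i<K*n. if A i = a \<and> V i \<noteq> v then f (d i) else 0\<bar>"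
    unfolding Pi_out_def N_of_def using nout_pos L2 npos by (simp add: abs_mult)
  also have "\<dots> \<le> inverse (real n * (real L - 1) / real L) * (real n * (real L - 1) / real L)"
    by (rule mult_left_mono[OF s], rule less_imp_le, rule positive_imp_inverse_positive, rule nout_pos)
  also have "\<dots> = 1" using nout_pos by (metis left_inverse less_irrefl)
  finally show ?thesis .
qed

lemma sum_if_diff:
  "(\<Sum>i<(N::nat). if C i then f i - g i else 0) = (\<Sum>i<N. if C i then f i else 0) - (\<Sum>i<N. if C i then g i else (0::real))"
  by (subst sum_subtractf[symmetric]) (rule sum.cong, auto)

lemma in_lin: "Pi_in K n L A V d (\<lambda>x. f x - g x) v a = Pi_in K n L A V d f v a - Pi_in K n L A V d g v a"
  unfolding Pi_in_def by (simp add: sum_if_diff right_diff_distrib)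

lemma out_lin: "Pi_out K n L A V d (\<lambda>x. f x - g x) v a = Pi_out K n L A V d f v a - Pi_out K n L A V d g v a"
  unfolding Pi_out_def by (simp add: sum_if_diff right_diff_distrib)

lemma swap3:
  "(\<Sum>v\<in>{1..L}. \<Sum>a\<in>{1..K}. \<Sum>i<(N::nat). F v a i) = (\<Sum>i<N. \<Sum>v\<in>{1..L}. \<Sum>a\<in>{1..K}. (F v a i::real))"
proof -
  have "(\<Sum>v\<in>{1..L}. \<Sum>a\<in>{1..K}. \<Sum>i<N. F v a i) = (\<Sum>v\<in>{1..L}. \<Sum>i<N. \<Sum>a\<in>{1..K}. F v a i)"
    by (rule sum.cong[OF refl], rule sum.swap)
  also have "\<dots> = (\<Sum>i<N. \<Sum>v\<in>{1..L}. \<Sum>a\<in>{1..K}. F v a i)" by (rule sum.swap)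
  finally show ?thesis .
qed

lemma in_count:
  assumes i: "i < K*n"
  shows "(\<Sum>v\<in>{1..L}. \<Sum>a\<in>{1..K}. if A i = a \<and> V i = v then x else 0) = (x::real)"
proof -
  have "(\<Sum>v\<in>{1..L}. \<Sum>a\<in>{1..K}. if A i = a \<and> V i = v then x else 0)
      = (\<Sum>v\<in>{1..L}. if V i = v then x else 0)"
  proof (rule sum.cong[OF refl])
    fix v assume "v \<in> {1..L}"
    have "(\<Sum>a\<in>{1..K}. if A i = a \<and> V i = v then x else 0) = (\<Sum>a\<in>{1..K}. if A i = a then (if V i = v then x else 0) else 0)"
      by (rule sum.cong) auto
    also have "\<dots> = (if V i = v then x else 0)" using A_range i by (simp add: sum.delta)
    finally show "(\<Sum>a\<in>{1..K}. if A i = a \<and> V i = v then x else 0) = (if V i = v then x else 0)" .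
  qed
  also have "\<dots> = x" using V_range i by (simp add: sum.delta)
  finally show ?thesis .
qed

lemma out_count:
  assumes i: "i < K*n"
  shows "(\<Sum>v\<in>{1..L}. \<Sum>a\<in>{1..K}. if A i = a \<and> V i \<noteq> v then x else 0) = (real L - 1) * (x::real)"
proof -
  have "(\<Sum>v\<in>{1..L}. \<Sum>a\<in>{1..K}. if A i = a \<and> V i \<noteq> v then x else 0)
      = (\<Sum>v\<in>{1..L}. x - (if V i = v then x else 0))"
  proof (rule sum.cong[OF refl])
    fix v assume "v \<in> {1..L}"
    have "(\<Sum>a\<in>{1..K}. if A i = a \<and> V i \<noteq> v then x else 0) = (\<Sum>a\<in>{1..K}. if A i = a then (if V i \<noteq> v then x else 0) else 0)"
      by (rule sum.cong) auto
    also have "\<dots> = (if V i \<noteq> v then x else 0)" using A_range i by (simp add: sum.delta)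
    finally show "(\<Sum>a\<in>{1..K}. if A i = a \<and> V i \<noteq> v then x else 0) = x - (if V i = v then x else 0)" by simp
  qed
  also have "\<dots> = real L * x - x" using V_range i by (simp add: sum_subtractf sum.delta)
  finally show ?thesis by (simp add: algebra_simps)
qed

lemma in_sum:
  "(\<Sum>v\<in>{1..L}. \<Sum>a\<in>{1..K}. \<bar>Pi_in K n L A V d f v a\<bar>) \<le> real L / real n * (\<Sum>i<K*n. \<bar>f (d i)\<bar>)"
proof -
  let ?c = "inverse (real n / real L)"
  have c0: "?c \<ge> 0" using nL_pos by simp
  have "(\<Sum>v\<in>{1..L}. \<Sum>a\<in>{1..K}. \<bar>Pi_in K n L A V d f v a\<bar>)
     \<le> (\<Sum>v\<in>{1..L}. \<Sum>a\<in>{1..K}. ?c * (\<Sum>i<K*n. if A i = a \<and> V i = v then \<bar>f (d i)\<bar> else 0))"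
  proof (intro sum_mono)
    fix v a
    have "\<bar>Pi_in K n L A V d f v a\<bar> = ?c * \<bar>\<Sum>i<K*n. if A i = a \<and> V i = v then f (d i) else 0\<bar>"
      unfolding Pi_in_def N_of_def using c0 by (simp add: abs_mult)
    also have "\<dots> \<le> ?c * (\<Sum>i<K*n. if A i = a \<and> V i = v then \<bar>f (d i)\<bar> else 0)"
    proof (rule mult_left_mono[OF _ c0])
      have "\<bar>\<Sum>i<K*n. if A i = a \<and> V i = v then f (d i) else 0\<bar> \<le> (\<Sum>i<K*n. \<bar>if A i = a \<and> V i = v then f (d i) else 0\<bar>)"
        by (rule sum_abs)
      also have "\<dots> = (\<Sum>i<K*n. if A i = a \<and> V i = v then \<bar>f (d i)\<bar> else 0)"
        by (rule sum.cong) auto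
      finally show "\<bar>\<Sum>i<K*n. if A i = a \<and> V i = v then f (d i) else 0\<bar> \<le> (\<Sum>i<K*n. if A i = a \<and> V i = v then \<bar>f (d i)\<bar> else 0)" .
    qed
    finally show "\<bar>Pi_in K n L A V d f v a\<bar> \<le> ?c * (\<Sum>i<K*n. if A i = a \<and> V i = v then \<bar>f (d i)\<bar> else 0)" .
  qed
  also have "\<dots> = ?c * (\<Sum>v\<in>{1..L}. \<Sum>a\<in>{1..K}. \<Sum>i<K*n. if A i = a \<and> V i = v then \<bar>f (d i)\<bar> else 0)"
    by (simp add: sum_distrib_left)
  also have "\<dots> = ?c * (\<Sum>i<K*n. \<Sum>v\<in>{1..L}. \<Sum>a\<in>{1..K}. if A i = a \<and> V i = v then \<bar>f (d i)\<bar> else 0)"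
    by (simp only: swap3)
  also have "\<dots> = ?c * (\<Sum>i<K*n. \<bar>f (d i)\<bar>)"
    by (rule arg_cong[where f="\<lambda>x. ?c * x"], rule sum.cong[OF refl], rule in_count, simp)
  also have "?c = real L / real n" by simp
  finally show ?thesis .
qed

lemma out_sum:
  "(\<Sum>v\<in>{1..L}. \<Sum>a\<in>{1..K}. \<bar>Pi_out K n L A V d f v a\<bar>) \<le> real L / real n * (\<Sum>i<K*n. \<bar>f (d i)\<bar>)"
proof -
  let ?c = "inverse (real n * (real L - 1) / real L)"
  have c0: "?c \<ge> 0" using nout_pos by (simp only: inverse_nonnegative_iff_nonnegative less_imp_le)
  have "(\<Sum>v\<in>{1..L}. \<Sum>a\<in>{1..K}. \<bar>Pi_out K n L A V d f v a\<bar>)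
     \<le> (\<Sum>v\<in>{1..L}. \<Sum>a\<in>{1..K}. ?c * (\<Sum>i<K*n. if A i = a \<and> V i \<noteq> v then \<bar>f (d i)\<bar> else 0))"
  proof (intro sum_mono)
    fix v a
    have "\<bar>Pi_out K n L A V d f v a\<bar> = ?c * \<bar>\<Sum>i<K*n. if A i = a \<and> V i \<noteq> v then f (d i) else 0\<bar>"
      unfolding Pi_out_def N_of_def using c0 L2 by (simp add: abs_mult)
    also have "\<dots> \<le> ?c * (\<Sum>i<K*n. if A i = a \<and> V i \<noteq> v then \<bar>f (d i)\<bar> else 0)"
    proof (rule mult_left_mono[OF _ c0])
      have "\<bar>\<Sum>i<K*n. if A i = a \<and> V i \<noteq> v then f (d i) else 0\<bar> \<le> (\<Sum>i<K*n. \<bar>if A i = a \<and> V i \<noteq> v then f (d i) else 0\<bar>)"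
        by (rule sum_abs)
      also have "\<dots> = (\<Sum>i<K*n. if A i = a \<and> V i \<noteq> v then \<bar>f (d i)\<bar> else 0)"
        by (rule sum.cong) auto
      finally show "\<bar>\<Sum>i<K*n. if A i = a \<and> V i \<noteq> v then f (d i) else 0\<bar> \<le> (\<Sum>i<K*n. if A i = a \<and> V i \<noteq> v then \<bar>f (d i)\<bar> else 0)" .
    qed
    finally show "\<bar>Pi_out K n L A V d f v a\<bar> \<le> ?c * (\<Sum>i<K*n. if A i = a \<and> V i \<noteq> v then \<bar>f (d i)\<bar> else 0)" .
  qed
  also have "\<dots> = ?c * (\<Sum>v\<in>{1..L}. \<Sum>a\<in>{1..K}. \<Sum>i<K*n. if A i = a \<and> V i \<noteq> v then \<bar>f (d i)\<bar> else 0)"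
    by (simp add: sum_distrib_left)
  also have "\<dots> = ?c * (\<Sum>i<K*n. \<Sum>v\<in>{1..L}. \<Sum>a\<in>{1..K}. if A i = a \<and> V i \<noteq> v then \<bar>f (d i)\<bar> else 0)"
    by (simp only: swap3)
  also have "\<dots> = ?c * (\<Sum>i<K*n. (real L - 1) * \<bar>f (d i)\<bar>)"
    by (rule arg_cong[where f="\<lambda>x. ?c * x"], rule sum.cong[OF refl], rule out_count, simp)
  also have "\<dots> = real L / real n * (\<Sum>i<K*n. \<bar>f (d i)\<bar>)"
  proof -
    have e: "(\<Sum>i<K*n. (real L - 1) * \<bar>f (d i)\<bar>) = (real L - 1) * (\<Sum>i<K*n. \<bar>f (d i)\<bar>)"
      by (simp only: sum_distrib_left)
    have "?c * (real L - 1) = real L / real n" using L2 npos by (simp add: field_simps)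
    thus ?thesis unfolding e by (simp only: mult.assoc[symmetric])
  qed
  finally show ?thesis .
qed

lemma emp_bound:
  assumes y: "\<forall>i<K*n. \<bar>ytil (d i)\<bar> \<le> 1" and b1: "\<forall>i<K*n. \<bar>liftS h1 (d i)\<bar> \<le> 1"
    and b2: "\<forall>i<K*n. \<bar>liftS h2 (d i)\<bar> \<le> 1"
  shows "\<bar>emp_risk K n L A V d h1 - emp_risk K n L A V d h2\<bar> \<le> 2 * norm1N K n d (liftS (\<lambda>s. h1 s - h2 s))"
proof -
  let ?g = "liftS (\<lambda>s. h1 s - h2 s)"
  have g_eq: "?g = (\<lambda>x. liftS h1 x - liftS h2 x)" by (simp add: liftS_def fun_eq_iff)
  let ?T = "\<lambda>h v a. - Pi_in K n L A V d ytil v a * Pi_out K n L A V d (liftS h) v a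
        + (1/2) * Pi_in K n L A V d (liftS h) v a * Pi_out K n L A V d (liftS h) v a"
  let ?c = "1 / (real L * real K)"
  have er: "emp_risk K n L A V d h = ?c * (\<Sum>v\<in>{1..L}. \<Sum>a\<in>{1..K}. ?T h v a)" for h
    unfolding emp_risk_def by (simp add: sum_distrib_left mult.assoc)
  have diff: "emp_risk K n L A V d h1 - emp_risk K n L A V d h2 = ?c * (\<Sum>v\<in>{1..L}. \<Sum>a\<in>{1..K}. ?T h1 v a - ?T h2 v a)"
    unfolding er by (simp add: sum_subtractf right_diff_distrib)
  let ?S = "\<Sum>i<K*n. \<bar>?g (d i)\<bar>"
  have pt: "\<bar>?T h1 v a - ?T h2 v a\<bar> \<le> 3/2 * \<bar>Pi_out K n L A V d ?g v a\<bar> + 1/2 * \<bar>Pi_in K n L A V d ?g v a\<bar>"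
    if "v \<in> {1..L}" "a \<in> {1..K}" for v a
    unfolding g_eq in_lin out_lin
    by (rule alg_bound) (use that in_bound out_bound y b1 b2 in auto)
  have c0: "?c \<ge> 0" by simp
  have "\<bar>emp_risk K n L A V d h1 - emp_risk K n L A V d h2\<bar> = ?c * \<bar>\<Sum>v\<in>{1..L}. \<Sum>a\<in>{1..K}. ?T h1 v a - ?T h2 v a\<bar>"
    unfolding diff by (simp add: abs_mult)
  also have "\<dots> \<le> ?c * (\<Sum>v\<in>{1..L}. \<Sum>a\<in>{1..K}. 3/2 * \<bar>Pi_out K n L A V d ?g v a\<bar> + 1/2 * \<bar>Pi_in K n L A V d ?g v a\<bar>)"
  proof (rule mult_left_mono[OF _ c0])
    have "\<bar>\<Sum>v\<in>{1..L}. \<Sum>a\<in>{1..K}. ?T h1 v a - ?T h2 v a\<bar> \<le> (\<Sum>v\<in>{1..L}. \<bar>\<Sum>a\<in>{1..K}. ?T h1 v a - ?T h2 v a\<bar>)"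
      by (rule sum_abs)
    also have "\<dots> \<le> (\<Sum>v\<in>{1..L}. \<Sum>a\<in>{1..K}. \<bar>?T h1 v a - ?T h2 v a\<bar>)"
      by (rule sum_mono, rule sum_abs)
    also have "\<dots> \<le> (\<Sum>v\<in>{1..L}. \<Sum>a\<in>{1..K}. 3/2 * \<bar>Pi_out K n L A V d ?g v a\<bar> + 1/2 * \<bar>Pi_in K n L A V d ?g v a\<bar>)"
      by (intro sum_mono pt)
    finally show "\<bar>\<Sum>v\<in>{1..L}. \<Sum>a\<in>{1..K}. ?T h1 v a - ?T h2 v a\<bar> \<le> (\<Sum>v\<in>{1..L}. \<Sum>a\<in>{1..K}. 3/2 * \<bar>Pi_out K n L A V d ?g v a\<bar> + 1/2 * \<bar>Pi_in K n L A V d ?g v a\<bar>)" .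
  qed
  also have "\<dots> = ?c * (3/2 * (\<Sum>v\<in>{1..L}. \<Sum>a\<in>{1..K}. \<bar>Pi_out K n L A V d ?g v a\<bar>) + 1/2 * (\<Sum>v\<in>{1..L}. \<Sum>a\<in>{1..K}. \<bar>Pi_in K n L A V d ?g v a\<bar>))"
    by (simp add: sum.distrib sum_distrib_left)
  also have "\<dots> \<le> ?c * (3/2 * (real L / real n * ?S) + 1/2 * (real L / real n * ?S))"
    by (intro mult_left_mono[OF _ c0] add_mono mult_left_mono in_sum out_sum) auto
  also have "\<dots> = 2 * norm1N K n d ?g"
    unfolding norm1N_def N_of_def using L2 npos K1 by (simp add: field_simps)
  finally show ?thesis .
qed

end

lemma pop_bound:
  assumes K1: "K \<ge> 1"
    and hyp: "\<forall>a\<in>{1..K}. \<bar>Pi_pop P ytil a\<bar> \<le> 1 \<and> \<bar>Pi_pop P (liftS h1) a\<bar> \<le> 1 \<and> \<bar>Pi_pop P (liftS h2) a\<bar> \<le> 1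
       \<and> Pi_pop P (liftS (\<lambda>s. h1 s - h2 s)) a = Pi_pop P (liftS h1) a - Pi_pop P (liftS h2) a"
  shows "\<bar>pop_risk K P h1 - pop_risk K P h2\<bar> \<le> 2 * norm1K K (Pi_pop P (liftS (\<lambda>s. h1 s - h2 s)))"
proof -
  let ?T = "\<lambda>h a. - (Pi_pop P ytil a * Pi_pop P (liftS h) a) + 1/2 * (Pi_pop P (liftS h) a)^2"
  have pr: "pop_risk K P h = (1 / real K) * (\<Sum>a\<in>{1..K}. ?T h a)" for h
  proof -
    have "pop_risk K P h = (\<Sum>a\<in>{1..K}. - (1 / real K) * (Pi_pop P ytil a * Pi_pop P (liftS h) a) + (1 / (2 * real K)) * (Pi_pop P (liftS h) a)\<^sup>2)"
      unfolding pop_risk_def by (simp only: sum.distrib sum_distrib_left)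
    also have "\<dots> = (\<Sum>a\<in>{1..K}. (1 / real K) * ?T h a)"
      by (rule sum.cong) (auto simp: field_simps)
    finally show ?thesis by (simp only: sum_distrib_left)
  qed
  have "\<bar>pop_risk K P h1 - pop_risk K P h2\<bar> = (1 / real K) * \<bar>\<Sum>a\<in>{1..K}. ?T h1 a - ?T h2 a\<bar>"
  proof -
    have "pop_risk K P h1 - pop_risk K P h2 = (1 / real K) * (\<Sum>a\<in>{1..K}. ?T h1 a - ?T h2 a)"
      by (simp only: pr sum_subtractf right_diff_distrib)
    thus ?thesis by (simp only: abs_mult) simp
  qed
  also have "\<dots> \<le> (1 / real K) * (\<Sum>a\<in>{1..K}. 2 * \<bar>Pi_pop P (liftS (\<lambda>s. h1 s - h2 s)) a\<bar>)"
  proof (rule mult_left_mono)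
    have "\<bar>\<Sum>a\<in>{1..K}. ?T h1 a - ?T h2 a\<bar> \<le> (\<Sum>a\<in>{1..K}. \<bar>?T h1 a - ?T h2 a\<bar>)" by (rule sum_abs)
    also have "\<dots> \<le> (\<Sum>a\<in>{1..K}. 2 * \<bar>Pi_pop P (liftS (\<lambda>s. h1 s - h2 s)) a\<bar>)"
    proof (rule sum_mono)
      fix a assume a: "a \<in> {1..K}"
      show "\<bar>?T h1 a - ?T h2 a\<bar> \<le> 2 * \<bar>Pi_pop P (liftS (\<lambda>s. h1 s - h2 s)) a\<bar>"
        using pop_alg[of "Pi_pop P ytil a" "Pi_pop P (liftS h1) a" "Pi_pop P (liftS h2) a"] hyp a by auto
    qed
    finally show "\<bar>\<Sum>a\<in>{1..K}. ?T h1 a - ?T h2 a\<bar> \<le> (\<Sum>a\<in>{1..K}. 2 * \<bar>Pi_pop P (liftS (\<lambda>s. h1 s - h2 s)) a\<bar>)" .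
  qed simp
  also have "\<dots> = 2 * norm1K K (Pi_pop P (liftS (\<lambda>s. h1 s - h2 s)))"
    unfolding norm1K_def by (simp add: sum_distrib_left)
  finally show ?thesis .
qed

theorem lemma4:
  fixes M :: "'w measure" and Ms :: "'s measure"
    and S :: "nat \<Rightarrow> 'w \<Rightarrow> 's" and Y :: "nat \<Rightarrow> 'w \<Rightarrow> real"
    and A V :: "nat \<Rightarrow> nat"
    and P :: "nat \<Rightarrow> ('s \<times> real) measure"
    and H :: "('s \<Rightarrow> real) set"
    and K n L :: nat
  assumes M: "prob_space M"
    and L2: "L \<ge> 2" and Ldvd: "L dvd n" and npos: "n > 0" and K1: "K \<ge> 1"
    and A_range: "\<forall>i<K*n. A i \<in> {1..K}"
    and V_range: "\<forall>i<K*n. V i \<in> {1..L}"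
    and cell_size: "\<forall>a\<in>{1..K}. card {i. i < K*n \<and> A i = a} = n"
    and fold_size: "\<forall>a\<in>{1..K}. \<forall>v\<in>{1..L}. card {i. i < K*n \<and> A i = a \<and> V i = v} = n div L"
    and S_meas: "\<forall>i<K*n. S i \<in> measurable M Ms"
    and Y_meas: "\<forall>i<K*n. Y i \<in> borel_measurable M"
    and indep: "prob_space.indep_vars M (\<lambda>_. Ms \<Otimes>\<^sub>M borel) (\<lambda>i \<omega>. (S i \<omega>, Y i \<omega>)) {..<K*n}"
    and ident: "\<forall>i<K*n. distr M (Ms \<Otimes>\<^sub>M borel) (\<lambda>\<omega>. (S i \<omega>, Y i \<omega>)) = P (A i)"
    and Y_bound: "\<forall>i<K*n. AE \<omega> in M. \<bar>Y i \<omega>\<bar> \<le> 1"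
    and H_meas: "\<forall>h\<in>H. h \<in> borel_measurable Ms"
    and H_bound: "\<forall>h\<in>H. \<forall>s\<in>space Ms. \<bar>h s\<bar> \<le> 1"
  shows "AE \<omega> in M. \<forall>\<epsilon>>0. \<forall>h1\<in>H. \<forall>h2\<in>H.
           rhoN K n P (\<lambda>i. (S i \<omega>, Y i \<omega>)) (liftS (\<lambda>s. h1 s - h2 s)) \<le> \<epsilon> \<longrightarrow>
           (pop_risk K P h1 - emp_risk K n L A V (\<lambda>i. (S i \<omega>, Y i \<omega>)) h1)
           - (pop_risk K P h2 - emp_risk K n L A V (\<lambda>i. (S i \<omega>, Y i \<omega>)) h2) \<le> 2 * \<epsilon>"
proof -
  interpret prob_space M by (rule M)
  have popfacts: "\<bar>Pi_pop P ytil a\<bar> \<le> 1 \<and> \<bar>Pi_pop P (liftS h1) a\<bar> \<le> 1 \<and> \<bar>Pi_pop P (liftS h2) a\<bar> \<le> 1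
       \<and> Pi_pop P (liftS (\<lambda>s. h1 s - h2 s)) a = Pi_pop P (liftS h1) a - Pi_pop P (liftS h2) a"
    if a: "a \<in> {1..K}" and h1: "h1 \<in> H" and h2: "h2 \<in> H" for a h1 h2
  proof -
    have "card {i. i < K*n \<and> A i = a} = n" using cell_size a by auto
    hence "{i. i < K*n \<and> A i = a} \<noteq> {}" using npos by (metis card.empty less_irrefl)
    then obtain i where i: "i < K*n" "A i = a" by auto
    let ?X = "\<lambda>\<omega>. (S i \<omega>, Y i \<omega>)"
    have Xm: "?X \<in> M \<rightarrow>\<^sub>M Ms \<Otimes>\<^sub>M borel"
      using S_meas Y_meas i by (intro measurable_Pair) auto
    have Pa: "P a = distr M (Ms \<Otimes>\<^sub>M borel) ?X" using ident i by auto
    have Q: "prob_space (P a)" unfolding Pa by (rule prob_space_distr[OF Xm])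
    have yb: "AE x in P a. \<bar>ytil x\<bar> \<le> 1"
      unfolding Pa ytil_def
      by (subst AE_distr_iff[OF Xm]) (use Y_bound i in auto)
    have ym: "ytil \<in> borel_measurable (P a)" unfolding Pa ytil_def by simp
    have hb: "AE x in P a. \<bar>liftS h x\<bar> \<le> 1" if "h \<in> H" for h
      unfolding Pa liftS_def using H_bound that by (intro AE_I2) (auto simp: space_pair_measure)
    have hm: "liftS h \<in> borel_measurable (P a)" if "h \<in> H" for h
      unfolding Pa liftS_def using H_meas that by (simp, intro measurable_compose[OF measurable_fst]) auto
    have i1: "integrable (P a) (liftS h1)" by (rule int_bound(1)[OF Q hm[OF h1] hb[OF h1]])
    have i2: "integrable (P a) (liftS h2)" by (rule int_bound(1)[OF Q hm[OF h2] hb[OF h2]])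
    have lin: "Pi_pop P (liftS (\<lambda>s. h1 s - h2 s)) a = Pi_pop P (liftS h1) a - Pi_pop P (liftS h2) a"
    proof -
      have "liftS (\<lambda>s. h1 s - h2 s) = (\<lambda>x. liftS h1 x - liftS h2 x)" by (simp add: liftS_def fun_eq_iff)
      thus ?thesis unfolding Pi_pop_def using Bochner_Integration.integral_diff[OF i1 i2] by simp
    qed
    show ?thesis unfolding Pi_pop_def
      using int_bound(2)[OF Q ym yb] int_bound(2)[OF Q hm[OF h1] hb[OF h1]] int_bound(2)[OF Q hm[OF h2] hb[OF h2]] lin
      unfolding Pi_pop_def by auto
  qed
  have AEY: "AE \<omega> in M. \<forall>i\<in>{..<K*n}. \<bar>Y i \<omega>\<bar> \<le> 1"
    using Y_bound by (subst eventually_ball_finite_distrib) auto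
  show ?thesis
    using AEY AE_space
  proof eventually_elim
    case (elim \<omega>)
    let ?d = "\<lambda>i. (S i \<omega>, Y i \<omega>)"
    have Sin: "S i \<omega> \<in> space Ms" if "i < K*n" for i
      using S_meas that elim(2) by (auto intro: measurable_space)
    show ?case
    proof (intro allI impI ballI)
      fix \<epsilon> :: real and h1 h2 assume h1: "h1 \<in> H" and h2: "h2 \<in> H"
        and rho: "rhoN K n P ?d (liftS (\<lambda>s. h1 s - h2 s)) \<le> \<epsilon>"
      have pb: "\<bar>pop_risk K P h1 - pop_risk K P h2\<bar> \<le> 2 * norm1K K (Pi_pop P (liftS (\<lambda>s. h1 s - h2 s)))"
        by (rule pop_bound[OF K1]) (use popfacts h1 h2 in auto)
      have eb: "\<bar>emp_risk K n L A V ?d h1 - emp_risk K n L A V ?d h2\<bar> \<le> 2 * norm1N K n ?d (liftS (\<lambda>s. h1 s - h2 s))"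
        by (rule emp_bound[OF L2 Ldvd npos K1 A_range V_range cell_size fold_size])
           (use elim(1) Sin H_bound h1 h2 in \<open>auto simp: ytil_def liftS_def\<close>)
      show "(pop_risk K P h1 - emp_risk K n L A V ?d h1) - (pop_risk K P h2 - emp_risk K n L A V ?d h2) \<le> 2 * \<epsilon>"
        using pb eb rho unfolding rhoN_def by (simp add: abs_le_iff)
    qed
  qed
qed

end
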